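(* Under the setting below, suppose that (P) is feasible for some $\gamma>1$ and that $m>0$ and $G^a>0$ entrywise for all $a$. Let $\bar\gamma_N$ denote the supremum of the values $\gamma>1$ for which (P) is feasible. Then for any $\gamma\in[1,\bar\gamma_N)$ there exist a solution $\theta$ of (P) and a solution $V$ of (D), and at these solutions: (1) for each $j=1,\dots,N-1$ there exists at least one $a_j\in\{1,\dots,M\}$ such that $[V]_j=\gamma[P^1_{T_{a_j}}V]_j+[G^{a_j}]_j$ and $[\theta^{a_j}]_j>0$; (2) there exists a solution $\tilde\theta$ of (P) such that for each $j=1,\dots,N-1$ there is exactly one $a_j\in\{1,\dots,M\}$ with $[\tilde\theta^{a_j}]_j>0$ and $[\tilde\theta^{a'}]_j=0$ for all $a'\ne a_j$.
   Context: Finite-dimensional setting: $\mathcal{X}_N=\{D_1,\dots,D_N\}$ is a finite partition of a compact state space $X\subset\mathbb{R}^q$ with the attractor set $\mathcal{A}\subseteq D_N$; $\mathcal{U}_M=\{u^1,\dots,u^M\}$ is a finite set of control values; $\{\xi^1,\dots,\xi^L\}$ is a finite set of uncertainty values with probabilities $v^1,\dots,v^L\ge0$, $\sum_\ell v^\ell=1$. For the system $x_{n+1}=T(x_n,u_n,\xi_n)$, let $T_{u^a,\xi^\ell}=T(\cdot,u^a,\xi^\ell):X\to X$ and define the $N\times N$ Markov matrix $P_{T_{a,\ell}}$ by $[P_{T_{a,\ell}}]_{ij}=m_L(T_{u^a,\xi^\ell}^{-1}(D_j)\cap D_i)/m_L(D_i)$, $m_L$ the Lebesgue measure. Set $P_{T_a}=\sum_{\ell=1}^L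 v^\ell P_{T_{a,\ell}}$ and let $P^1_{T_a}\in\mathbb{R}^{(N-1)\times(N-1)}$ be the submatrix of its first $N-1$ rows and columns. Let $G^{a,\ell}\in\mathbb{R}^{N-1}$ be given cost vectors ($[G^{a,\ell}]_j$ is the cost of using $u^a$ on $D_j$ with uncertainty $\xi^\ell$) and $G^a=\sum_\ell v^\ell G^{a,\ell}$. Let $m\in\mathbb{R}^{N-1}$ be a given vector. Prime denotes transpose. Primal LP (P): minimize $\sum_{a=1}^M (G^a)'\theta^a$ over $\theta^1,\dots,\theta^M\in\mathbb{R}^{N-1}$, $\theta^a\ge0$, subject to $\gamma\sum_{a=1}^M(P^1_{T_a})'\theta^a-\sum_{a=1}^M\theta^a=-m$. Dual LP (D): maximize $m'V$ over $V\in\mathbb{R}^{N-1}$ subject to $V\le\gamma P^1_{T_a}V+G^a$ (entrywise) for all $a=1,\dots,M$. *)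

theory Defs
  imports "HOL-Analysis.Analysis"
begin

text \<open>Indices are 1-based as in the paper: cells i = 1..N, controls a = 1..M,
  uncertainties l = 1..L. Vectors in R^(N-1) are functions nat => real read on 1..N-1.\<close>

definition markov_al ::
  "('x::euclidean_space \<Rightarrow> 'u \<Rightarrow> 'e \<Rightarrow> 'x) \<Rightarrow> (nat \<Rightarrow> 'x set) \<Rightarrow> (nat \<Rightarrow> 'u) \<Rightarrow> (nat \<Rightarrow> 'e)
    \<Rightarrow> nat \<Rightarrow> nat \<Rightarrow> nat \<Rightarrow> nat \<Rightarrow> real" where
  "markov_al T D u \<xi> a l i j =
     measure lebesgue ((\<lambda>x. T x (u a) (\<xi> l)) -` D j \<inter> D i) / measure lebesgue (D i)"

text \<open>P_{T_a} = sum_l v^l P_{T_{a,l}}; entry (i,j). P^1_{T_a} is its restriction to i,j \<le> N-1.\<close>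
definition markov_a ::
  "('x::euclidean_space \<Rightarrow> 'u \<Rightarrow> 'e \<Rightarrow> 'x) \<Rightarrow> (nat \<Rightarrow> 'x set) \<Rightarrow> (nat \<Rightarrow> 'u) \<Rightarrow> (nat \<Rightarrow> 'e)
    \<Rightarrow> (nat \<Rightarrow> real) \<Rightarrow> nat \<Rightarrow> nat \<Rightarrow> nat \<Rightarrow> nat \<Rightarrow> real" where
  "markov_a T D u \<xi> v L a i j = (\<Sum>l = 1..L. v l * markov_al T D u \<xi> a l i j)"

definition cost_a :: "(nat \<Rightarrow> nat \<Rightarrow> nat \<Rightarrow> real) \<Rightarrow> (nat \<Rightarrow> real) \<Rightarrow> nat \<Rightarrow> nat \<Rightarrow> nat \<Rightarrow> real" where
  "cost_a G v L a j = (\<Sum>l = 1..L. v l * G a l j)"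

text \<open>Generic LP pair. P a i j = [P^1_{T_a}]_{ij}, Ga a j = [G^a]_j, n = N-1,
  theta a j = [theta^a]_j.\<close>
definition primal_feasible ::
  "nat \<Rightarrow> nat \<Rightarrow> (nat \<Rightarrow> nat \<Rightarrow> nat \<Rightarrow> real) \<Rightarrow> real \<Rightarrow> (nat \<Rightarrow> real) \<Rightarrow> (nat \<Rightarrow> nat \<Rightarrow> real) \<Rightarrow> bool" where
  "primal_feasible M n P \<gamma> m \<theta> \<longleftrightarrow>
     (\<forall>a\<in>{1..M}. \<forall>j\<in>{1..n}. 0 \<le> \<theta> a j) \<and>
     (\<forall>j\<in>{1..n}. \<gamma> * (\<Sum>a = 1..M. \<Sum>i = 1..n. P a i j * \<theta> a i) - (\<Sum>a = 1..M. \<theta> a j) = - m j)"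

definition primal_obj :: "nat \<Rightarrow> nat \<Rightarrow> (nat \<Rightarrow> nat \<Rightarrow> real) \<Rightarrow> (nat \<Rightarrow> nat \<Rightarrow> real) \<Rightarrow> real" where
  "primal_obj M n Ga \<theta> = (\<Sum>a = 1..M. \<Sum>j = 1..n. Ga a j * \<theta> a j)"

definition primal_solution ::
  "nat \<Rightarrow> nat \<Rightarrow> (nat \<Rightarrow> nat \<Rightarrow> nat \<Rightarrow> real) \<Rightarrow> (nat \<Rightarrow> nat \<Rightarrow> real) \<Rightarrow> real \<Rightarrow> (nat \<Rightarrow> real)
     \<Rightarrow> (nat \<Rightarrow> nat \<Rightarrow> real) \<Rightarrow> bool" where
  "primal_solution M n P Ga \<gamma> m \<theta> \<longleftrightarrow> primal_feasible M n P \<gamma> m \<theta> \<and>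
     (\<forall>\<theta>'. primal_feasible M n P \<gamma> m \<theta>' \<longrightarrow> primal_obj M n Ga \<theta> \<le> primal_obj M n Ga \<theta>')"

definition dual_feasible ::
  "nat \<Rightarrow> nat \<Rightarrow> (nat \<Rightarrow> nat \<Rightarrow> nat \<Rightarrow> real) \<Rightarrow> (nat \<Rightarrow> nat \<Rightarrow> real) \<Rightarrow> real \<Rightarrow> (nat \<Rightarrow> real) \<Rightarrow> bool" where
  "dual_feasible M n P Ga \<gamma> V \<longleftrightarrow>
     (\<forall>a\<in>{1..M}. \<forall>j\<in>{1..n}. V j \<le> \<gamma> * (\<Sum>i = 1..n. P a j i * V i) + Ga a j)"

definition dual_solution ::
  "nat \<Rightarrow> nat \<Rightarrow> (nat \<Rightarrow> nat \<Rightarrow> nat \<Rightarrow> real) \<Rightarrow> (nat \<Rightarrow> nat \<Rightarrow> real) \<Rightarrow> real \<Rightarrow> (nat \<Rightarrow> real)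
     \<Rightarrow> (nat \<Rightarrow> real) \<Rightarrow> bool" where
  "dual_solution M n P Ga \<gamma> m V \<longleftrightarrow> dual_feasible M n P Ga \<gamma> V \<and>
     (\<forall>V'. dual_feasible M n P Ga \<gamma> V' \<longrightarrow> (\<Sum>j = 1..n. m j * V' j) \<le> (\<Sum>j = 1..n. m j * V j))"

end

theory Submission
  imports Defs
begin

lemma tarski:
  fixes F :: "(nat \<Rightarrow> real) \<Rightarrow> (nat \<Rightarrow> real)" and I :: "nat set" and z :: "nat \<Rightarrow> real"
  assumes mono: "\<And>y y'. (\<forall>i\<in>I. 0 \<le> y i \<and> y i \<le> y' i) \<Longrightarrow> (\<forall>i\<in>I. F y i \<le> F y' i)"
  and pos: "\<And>y. (\<forall>i\<in>I. 0 \<le> y i) \<Longrightarrow> (\<forall>i\<in>I. 0 \<le> F y i)"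
  and bound: "\<And>y. (\<forall>i\<in>I. 0 \<le> y i \<and> y i \<le> F y i) \<Longrightarrow> (\<forall>i\<in>I. y i \<le> z i)"
  shows "\<exists>y. \<forall>i\<in>I. 0 \<le> y i \<and> y i = F y i"
proof -
  define A where "A = {y. \<forall>i\<in>I. 0 \<le> y i \<and> y i \<le> F y i}"
  define ys where "ys = (\<lambda>i. Sup ((\<lambda>y. y i) ` A))"
  have z0: "(\<lambda>_. 0) \<in> A" using pos[of "\<lambda>_. 0"] by (auto simp: A_def)
  have ne: "(\<lambda>y. y i) ` A \<noteq> {}" for i using z0 by blast
  have bdd: "bdd_above ((\<lambda>y. y i) ` A)" if "i \<in> I" for i
    using bound that unfolding A_def bdd_above_def by blast
  have ysi: "ys i = Sup ((\<lambda>y. y i) ` A)" for i by (simp add: ys_def)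
  have up: "y i \<le> ys i" if "y \<in> A" "i \<in> I" for y i
    unfolding ysi using bdd[OF that(2)] that(1) by (intro cSup_upper) auto
  have ys0: "0 \<le> ys i" if "i \<in> I" for i using up[OF z0 that] by simp
  have le: "y i \<le> F ys i" if "y \<in> A" "i \<in> I" for y i
  proof -
    have "\<forall>i\<in>I. F y i \<le> F ys i" using mono[of y ys] that(1) up[OF that(1)] by (auto simp: A_def)
    moreover have "y i \<le> F y i" using that by (auto simp: A_def)
    ultimately show ?thesis using that by force
  qed
  have ysF: "ys i \<le> F ys i" if "i \<in> I" for i
    unfolding ysi[of i] using ne le that by (intro cSup_least) auto
  have ysA: "ys \<in> A" using ys0 ysF by (auto simp: A_def)
  have FA: "F ys \<in> A"
  proof -
    have "\<forall>i\<in>I. 0 \<le> F ys i" using pos ys0 by blast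
    moreover have "\<forall>i\<in>I. F ys i \<le> F (F ys) i" using mono[of ys "F ys"] ys0 ysF by blast
    ultimately show ?thesis by (auto simp: A_def)
  qed
  show ?thesis
    using up[OF FA] ys0 ysF by (intro exI[of _ ys]) (auto intro: antisym)
qed

lemma cert:
  fixes I :: "nat set" and Q :: "nat \<Rightarrow> nat \<Rightarrow> real" and b w g :: "nat \<Rightarrow> real"
  assumes fin: "finite I"
  and Q: "\<forall>i\<in>I. \<forall>k\<in>I. 0 \<le> Q i k" and b: "\<forall>i\<in>I. 0 \<le> b i" and w: "\<forall>i\<in>I. 0 \<le> w i"
  and g: "\<forall>k\<in>I. 0 < g k" and cw: "\<forall>k\<in>I. g k + (\<Sum>i\<in>I. Q i k * w i) \<le> w k"
  shows "\<exists>y. \<forall>i\<in>I. 0 \<le> y i \<and> y i = b i + (\<Sum>k\<in>I. Q i k * y k)"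
proof (rule tarski[where z = "\<lambda>k. (\<Sum>i\<in>I. w i * b i) / g k"])
  fix y y' :: "nat \<Rightarrow> real" assume H: "\<forall>i\<in>I. 0 \<le> y i \<and> y i \<le> y' i"
  show "\<forall>i\<in>I. b i + (\<Sum>k\<in>I. Q i k * y k) \<le> b i + (\<Sum>k\<in>I. Q i k * y' k)"
    using H Q by (auto intro!: sum_mono mult_left_mono)
next
  fix y :: "nat \<Rightarrow> real" assume H: "\<forall>i\<in>I. 0 \<le> y i"
  show "\<forall>i\<in>I. 0 \<le> b i + (\<Sum>k\<in>I. Q i k * y k)"
    using H Q b by (auto intro!: add_nonneg_nonneg sum_nonneg)
next
  fix y :: "nat \<Rightarrow> real" assume H: "\<forall>i\<in>I. 0 \<le> y i \<and> y i \<le> b i + (\<Sum>k\<in>I. Q i k * y k)"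
  have "(\<Sum>k\<in>I. g k * y k) \<le> (\<Sum>k\<in>I. (w k - (\<Sum>i\<in>I. Q i k * w i)) * y k)"
    using H cw by (intro sum_mono mult_right_mono) (auto simp: algebra_simps)
  also have "\<dots> = (\<Sum>k\<in>I. w k * y k) - (\<Sum>k\<in>I. (\<Sum>i\<in>I. Q i k * w i) * y k)"
    by (simp add: algebra_simps sum_subtractf)
  also have "(\<Sum>k\<in>I. (\<Sum>i\<in>I. Q i k * w i) * y k) = (\<Sum>k\<in>I. \<Sum>i\<in>I. Q i k * w i * y k)"
    by (simp add: sum_distrib_right)
  also have "\<dots> = (\<Sum>i\<in>I. \<Sum>k\<in>I. Q i k * w i * y k)" by (rule sum.swap)
  also have "\<dots> = (\<Sum>i\<in>I. w i * (\<Sum>k\<in>I. Q i k * y k))"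
    by (simp add: sum_distrib_left mult.assoc mult.left_commute)
  also have "(\<Sum>k\<in>I. w k * y k) - (\<Sum>i\<in>I. w i * (\<Sum>k\<in>I. Q i k * y k))
      \<le> (\<Sum>k\<in>I. w k * y k) - (\<Sum>i\<in>I. w i * (y i - b i))"
    using H w by (intro diff_left_mono sum_mono mult_left_mono) (auto simp: algebra_simps)
  also have "\<dots> = (\<Sum>i\<in>I. w i * b i)"
    by (simp add: algebra_simps sum_subtractf)
  finally have S: "(\<Sum>k\<in>I. g k * y k) \<le> (\<Sum>i\<in>I. w i * b i)" .
  show "\<forall>k\<in>I. y k \<le> (\<Sum>i\<in>I. w i * b i) / g k"
  proof
    fix k assume k: "k \<in> I"
    have "g k * y k \<le> (\<Sum>k\<in>I. g k * y k)"
      using k fin H g by (intro member_le_sum) (auto intro: mult_nonneg_nonneg less_imp_le)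
    with S have "g k * y k \<le> (\<Sum>i\<in>I. w i * b i)" by linarith
    then show "y k \<le> (\<Sum>i\<in>I. w i * b i) / g k" using g k by (simp add: pos_le_divide_eq mult.commute)
  qed
qed



context
  fixes M n :: nat and P :: "nat \<Rightarrow> nat \<Rightarrow> nat \<Rightarrow> real" and Ga :: "nat \<Rightarrow> nat \<Rightarrow> real"
    and m :: "nat \<Rightarrow> real" and \<gamma> :: real
  assumes Pnn: "\<forall>a\<in>{1..M}. \<forall>i\<in>{1..n}. \<forall>j\<in>{1..n}. 0 \<le> P a i j"
  and Gpos: "\<forall>a\<in>{1..M}. \<forall>j\<in>{1..n}. 0 < Ga a j"
  and mpos: "\<forall>j\<in>{1..n}. 0 < m j"
  and gpos: "0 < \<gamma>"
begin

lemma ident: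
  assumes "primal_feasible M n P \<gamma> m \<theta>"
  shows "primal_obj M n Ga \<theta> = (\<Sum>j=1..n. m j * V j) +
    (\<Sum>a=1..M. \<Sum>j=1..n. \<theta> a j * (Ga a j + \<gamma> * (\<Sum>i=1..n. P a j i * V i) - V j))"
proof -
  have mj: "m j = (\<Sum>a=1..M. \<theta> a j) - \<gamma> * (\<Sum>a=1..M. \<Sum>i=1..n. P a i j * \<theta> a i)" if "j \<in> {1..n}" for j
    using assms that unfolding primal_feasible_def by force
  have "(\<Sum>j=1..n. m j * V j) = (\<Sum>j=1..n. (\<Sum>a=1..M. \<theta> a j) * V j)
      - \<gamma> * (\<Sum>j=1..n. (\<Sum>a=1..M. \<Sum>i=1..n. P a i j * \<theta> a i) * V j)"
  proof -
    have "(\<Sum>j=1..n. m j * V j) = (\<Sum>j=1..n. (\<Sum>a=1..M. \<theta> a j) * V j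
      - \<gamma> * ((\<Sum>a=1..M. \<Sum>i=1..n. P a i j * \<theta> a i) * V j))"
      by (rule sum.cong) (simp_all add: mj algebra_simps)
    then show ?thesis by (simp add: sum_subtractf sum_distrib_left)
  qed
  also have "(\<Sum>j=1..n. (\<Sum>a=1..M. \<theta> a j) * V j) = (\<Sum>a=1..M. \<Sum>j=1..n. \<theta> a j * V j)"
    unfolding sum_distrib_right by (rule sum.swap)
  also have "(\<Sum>j=1..n. (\<Sum>a=1..M. \<Sum>i=1..n. P a i j * \<theta> a i) * V j)
      = (\<Sum>a=1..M. \<Sum>j=1..n. \<Sum>i=1..n. P a i j * \<theta> a i * V j)"
    unfolding sum_distrib_right by (rule sum.swap)
  also have "\<dots> = (\<Sum>a=1..M. \<Sum>i=1..n. \<Sum>j=1..n. P a i j * \<theta> a i * V j)"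
    by (rule sum.cong[OF refl], rule sum.swap)
  also have "\<dots> = (\<Sum>a=1..M. \<Sum>j=1..n. \<theta> a j * (\<Sum>i=1..n. P a j i * V i))"
    by (simp add: sum_distrib_left mult.assoc mult.left_commute)
  finally have E: "(\<Sum>j=1..n. m j * V j) = (\<Sum>a=1..M. \<Sum>j=1..n. \<theta> a j * V j)
      - \<gamma> * (\<Sum>a=1..M. \<Sum>j=1..n. \<theta> a j * (\<Sum>i=1..n. P a j i * V i))" .
  have "(\<Sum>a=1..M. \<Sum>j=1..n. \<theta> a j * (Ga a j + \<gamma> * (\<Sum>i=1..n. P a j i * V i) - V j))
     = primal_obj M n Ga \<theta> + \<gamma> * (\<Sum>a=1..M. \<Sum>j=1..n. \<theta> a j * (\<Sum>i=1..n. P a j i * V i))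
       - (\<Sum>a=1..M. \<Sum>j=1..n. \<theta> a j * V j)"
    unfolding primal_obj_def
    by (simp add: algebra_simps sum.distrib sum_subtractf sum_distrib_left)
  with E show ?thesis by simp
qed


lemma weak:
  assumes "dual_feasible M n P Ga \<gamma> V" "primal_feasible M n P \<gamma> m \<theta>"
  shows "(\<Sum>j=1..n. m j * V j) \<le> primal_obj M n Ga \<theta>"
proof -
  have "0 \<le> (\<Sum>a=1..M. \<Sum>j=1..n. \<theta> a j * (Ga a j + \<gamma> * (\<Sum>i=1..n. P a j i * V i) - V j))"
    using assms unfolding dual_feasible_def primal_feasible_def
    by (intro sum_nonneg mult_nonneg_nonneg) (fastforce simp: add.commute)+
  then show ?thesis using ident[OF assms(2), of V] by linarith
qed

lemma occ_ge_m:
  assumes "primal_feasible M n P c m \<theta>" "0 \<le> c" "j \<in> {1..n}"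
  shows "m j \<le> (\<Sum>a=1..M. \<theta> a j)"
proof -
  have "0 \<le> c * (\<Sum>a=1..M. \<Sum>i=1..n. P a i j * \<theta> a i)"
    using assms Pnn unfolding primal_feasible_def
    by (intro mult_nonneg_nonneg sum_nonneg) auto
  moreover have "c * (\<Sum>a=1..M. \<Sum>i=1..n. P a i j * \<theta> a i) - (\<Sum>a=1..M. \<theta> a j) = - m j"
    using assms unfolding primal_feasible_def by blast
  ultimately show ?thesis by linarith
qed

lemma det_feas:
  assumes sig: "\<forall>j\<in>{1..n}. \<sigma> j \<in> {1..M}"
    and x: "\<forall>j\<in>{1..n}. 0 \<le> x j \<and> x j = m j + \<gamma> * (\<Sum>i=1..n. P (\<sigma> i) i j * x i)"
  shows "primal_feasible M n P \<gamma> m (\<lambda>a j. if a = \<sigma> j then x j else 0)"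
proof -
  have s1: "(\<Sum>a=1..M. (if a = \<sigma> j then x j else 0)) = x j" if "j \<in> {1..n}" for j
    using sig that by (simp add: sum.delta)
  have s2: "(\<Sum>a=1..M. \<Sum>i=1..n. P a i j * (if a = \<sigma> i then x i else 0)) = (\<Sum>i=1..n. P (\<sigma> i) i j * x i)" for j
  proof -
    have "(\<Sum>a=1..M. \<Sum>i=1..n. P a i j * (if a = \<sigma> i then x i else 0))
        = (\<Sum>i=1..n. \<Sum>a=1..M. P a i j * (if a = \<sigma> i then x i else 0))" by (rule sum.swap)
    also have "\<dots> = (\<Sum>i=1..n. P (\<sigma> i) i j * x i)"
    proof (rule sum.cong[OF refl])
      fix i assume "i \<in> {1..n}"
      have "(\<Sum>a=1..M. P a i j * (if a = \<sigma> i then x i else 0)) = (\<Sum>a=1..M. if a = \<sigma> i then P a i j * x i else 0)"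
        by (rule sum.cong) auto
      then show "(\<Sum>a=1..M. P a i j * (if a = \<sigma> i then x i else 0)) = P (\<sigma> i) i j * x i"
        using sig \<open>i \<in> {1..n}\<close> by (simp add: sum.delta)
    qed
    finally show ?thesis .
  qed
  have x0: "\<forall>j\<in>{1..n}. 0 \<le> x j" using x by blast
  have xe: "\<gamma> * (\<Sum>i=1..n. P (\<sigma> i) i j * x i) - x j = - m j" if "j \<in> {1..n}" for j
    using x that by force
  show ?thesis unfolding primal_feasible_def
    using x0 sig s1 s2 xe by auto
qed

lemma det_sum:
  fixes x :: "nat \<Rightarrow> real" and r :: "nat \<Rightarrow> nat \<Rightarrow> real"
  assumes sig: "\<forall>j\<in>{1..n}. \<sigma> j \<in> {1..M}"
  shows "(\<Sum>a=1..M. \<Sum>j=1..n. (if a = \<sigma> j then x j else 0) * r a j) = (\<Sum>j=1..n. x j * r (\<sigma> j) j)"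
proof -
  have "(\<Sum>a=1..M. \<Sum>j=1..n. (if a = \<sigma> j then x j else 0) * r a j)
      = (\<Sum>j=1..n. \<Sum>a=1..M. (if a = \<sigma> j then x j else 0) * r a j)" by (rule sum.swap)
  also have "\<dots> = (\<Sum>j=1..n. x j * r (\<sigma> j) j)"
  proof (rule sum.cong[OF refl])
    fix j assume "j \<in> {1..n}"
    have "(\<Sum>a=1..M. (if a = \<sigma> j then x j else 0) * r a j) = (\<Sum>a=1..M. if a = \<sigma> j then x j * r a j else 0)"
      by (rule sum.cong) auto
    then show "(\<Sum>a=1..M. (if a = \<sigma> j then x j else 0) * r a j) = x j * r (\<sigma> j) j"
      using sig \<open>j \<in> {1..n}\<close> by (simp add: sum.delta)
  qed
  finally show ?thesis .
qed

lemma det_value: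
  assumes sig: "\<forall>j\<in>{1..n}. \<sigma> j \<in> {1..M}"
    and x: "\<forall>j\<in>{1..n}. 0 \<le> x j \<and> x j = m j + \<gamma> * (\<Sum>i=1..n. P (\<sigma> i) i j * x i)"
  shows "\<exists>V. \<forall>j\<in>{1..n}. 0 \<le> V j \<and> V j = Ga (\<sigma> j) j + \<gamma> * (\<Sum>i=1..n. P (\<sigma> j) j i * V i)"
proof -
  have x0: "\<forall>j\<in>{1..n}. 0 \<le> x j" using x by blast
  have "\<exists>V. \<forall>j\<in>{1..n}. 0 \<le> V j \<and> V j = Ga (\<sigma> j) j + (\<Sum>i\<in>{1..n}. (\<gamma> * P (\<sigma> j) j i) * V i)"
  proof (rule cert[where I="{1..n}" and Q="\<lambda>j i. \<gamma> * P (\<sigma> j) j i" and b="\<lambda>j. Ga (\<sigma> j) j" and w = x and g = m])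
    show "\<forall>k\<in>{1..n}. m k + (\<Sum>i\<in>{1..n}. \<gamma> * P (\<sigma> i) i k * x i) \<le> x k"
    proof
      fix k assume "k \<in> {1..n}"
      then have "x k = m k + \<gamma> * (\<Sum>i=1..n. P (\<sigma> i) i k * x i)" using x by blast
      then show "m k + (\<Sum>i\<in>{1..n}. \<gamma> * P (\<sigma> i) i k * x i) \<le> x k"
        by (simp add: sum_distrib_left mult.assoc)
    qed
  next
    show "\<forall>i\<in>{1..n}. \<forall>k\<in>{1..n}. 0 \<le> \<gamma> * P (\<sigma> i) i k"
      using sig Pnn gpos by (auto intro!: mult_nonneg_nonneg)
  qed (use sig Gpos mpos x0 in \<open>auto intro: less_imp_le\<close>)
  then show ?thesis by (simp add: sum_distrib_left mult.assoc)
qed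

lemma det_from_cert:
  assumes sig: "\<forall>j\<in>{1..n}. \<sigma> j \<in> {1..M}"
    and W: "\<forall>j\<in>{1..n}. 0 \<le> W j"
    and c: "\<forall>k\<in>{1..n}. Ga (\<sigma> k) k + \<gamma> * (\<Sum>i=1..n. P (\<sigma> k) k i * W i) \<le> W k"
  shows "\<exists>x. \<forall>j\<in>{1..n}. 0 \<le> x j \<and> x j = m j + \<gamma> * (\<Sum>i=1..n. P (\<sigma> i) i j * x i)"
proof -
  have "\<exists>x. \<forall>j\<in>{1..n}. 0 \<le> x j \<and> x j = m j + (\<Sum>i\<in>{1..n}. (\<gamma> * P (\<sigma> i) i j) * x i)"
  proof (rule cert[where I="{1..n}" and Q="\<lambda>i k. \<gamma> * P (\<sigma> k) k i" and b=m and w = W and g = "\<lambda>k. Ga (\<sigma> k) k"])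
    show "\<forall>k\<in>{1..n}. Ga (\<sigma> k) k + (\<Sum>i\<in>{1..n}. \<gamma> * P (\<sigma> k) k i * W i) \<le> W k"
      using c by (simp add: sum_distrib_left mult.assoc)
  next
    show "\<forall>i\<in>{1..n}. \<forall>k\<in>{1..n}. 0 \<le> \<gamma> * P (\<sigma> k) k i"
      using sig Pnn gpos by (auto intro!: mult_nonneg_nonneg)
  qed (use sig Gpos mpos W in \<open>auto intro: less_imp_le\<close>)
  then show ?thesis by (simp add: sum_distrib_left mult.assoc)
qed


lemma exists_det:
  assumes gg: "\<gamma> \<le> \<gamma>'" and f0: "primal_feasible M n P \<gamma>' m \<theta>0"
  shows "\<exists>\<sigma> x. (\<forall>j\<in>{1..n}. \<sigma> j \<in> {1..M}) \<and>
           (\<forall>j\<in>{1..n}. 0 \<le> x j \<and> x j = m j + \<gamma> * (\<Sum>i=1..n. P (\<sigma> i) i j * x i))"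
proof -
  define X where "X j = (\<Sum>a=1..M. \<theta>0 a j)" for j
  have gp': "0 < \<gamma>'" using gpos gg by linarith
  have Gnn: "\<forall>a\<in>{1..M}. \<forall>j\<in>{1..n}. 0 \<le> Ga a j" using Gpos by (meson less_imp_le)
  have th0: "\<forall>a\<in>{1..M}. \<forall>j\<in>{1..n}. 0 \<le> \<theta>0 a j" using f0 unfolding primal_feasible_def by blast
  have Xm: "m j \<le> X j" if "j \<in> {1..n}" for j using occ_ge_m[OF f0 _ that] gp' by (simp add: X_def)
  have Xp: "0 < X j" if "j \<in> {1..n}" for j using Xm[OF that] mpos that by force
  have Xeq: "X j = m j + \<gamma>' * (\<Sum>a=1..M. \<Sum>i=1..n. P a i j * \<theta>0 a i)" if "j \<in> {1..n}" for j
    using f0 that unfolding primal_feasible_def X_def by force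
  have "\<exists>V. \<forall>j\<in>{1..n}. 0 \<le> V j \<and> V j = (\<Sum>a=1..M. \<theta>0 a j * Ga a j) / X j
       + (\<Sum>i\<in>{1..n}. (\<gamma>' * (\<Sum>a=1..M. \<theta>0 a j * P a j i) / X j) * V i)"
  proof (rule cert[where I="{1..n}" and Q="\<lambda>j i. \<gamma>' * (\<Sum>a=1..M. \<theta>0 a j * P a j i) / X j"
        and b="\<lambda>j. (\<Sum>a=1..M. \<theta>0 a j * Ga a j) / X j" and w=X and g=m])
    show "\<forall>k\<in>{1..n}. m k + (\<Sum>i\<in>{1..n}. \<gamma>' * (\<Sum>a=1..M. \<theta>0 a i * P a i k) / X i * X i) \<le> X k"
    proof
      fix k assume k: "k \<in> {1..n}"
      have "(\<Sum>i\<in>{1..n}. \<gamma>' * (\<Sum>a=1..M. \<theta>0 a i * P a i k) / X i * X i)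
          = (\<Sum>i\<in>{1..n}. \<gamma>' * (\<Sum>a=1..M. \<theta>0 a i * P a i k))"
        using Xp by (intro sum.cong) (auto, metis less_irrefl)
      also have "\<dots> = \<gamma>' * (\<Sum>i=1..n. \<Sum>a=1..M. \<theta>0 a i * P a i k)" by (simp add: sum_distrib_left)
      also have "\<dots> = \<gamma>' * (\<Sum>a=1..M. \<Sum>i=1..n. P a i k * \<theta>0 a i)"
        by (subst sum.swap) (simp add: mult.commute)
      finally show "m k + (\<Sum>i\<in>{1..n}. \<gamma>' * (\<Sum>a=1..M. \<theta>0 a i * P a i k) / X i * X i) \<le> X k"
        using Xeq[OF k] by simp
    qed
  next
    show "\<forall>i\<in>{1..n}. \<forall>k\<in>{1..n}. 0 \<le> \<gamma>' * (\<Sum>a=1..M. \<theta>0 a i * P a i k) / X i"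
      using th0 Pnn gp' Xp by (auto intro!: divide_nonneg_pos mult_nonneg_nonneg sum_nonneg)
  next
    show "\<forall>i\<in>{1..n}. 0 \<le> (\<Sum>a=1..M. \<theta>0 a i * Ga a i) / X i"
      using th0 Gnn Xp by (auto intro!: divide_nonneg_pos mult_nonneg_nonneg sum_nonneg)
  qed (use Xp mpos in \<open>auto intro: less_imp_le\<close>)
  then obtain V where V: "\<forall>j\<in>{1..n}. 0 \<le> V j \<and> V j = (\<Sum>a=1..M. \<theta>0 a j * Ga a j) / X j
       + (\<Sum>i\<in>{1..n}. (\<gamma>' * (\<Sum>a=1..M. \<theta>0 a j * P a j i) / X j) * V i)" by blast
  have V0: "\<forall>j\<in>{1..n}. 0 \<le> V j" using V by blast
  define h where "h a j = Ga a j + \<gamma> * (\<Sum>i=1..n. P a j i * V i)" for a j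
  have XV: "X j * V j = (\<Sum>a=1..M. \<theta>0 a j * (Ga a j + \<gamma>' * (\<Sum>i=1..n. P a j i * V i)))"
    if j: "j \<in> {1..n}" for j
  proof -
    have Ve: "V j = (\<Sum>a=1..M. \<theta>0 a j * Ga a j) / X j
       + (\<Sum>i\<in>{1..n}. (\<gamma>' * (\<Sum>a=1..M. \<theta>0 a j * P a j i) / X j) * V i)" using V j by blast
    have "(\<Sum>i\<in>{1..n}. (\<gamma>' * (\<Sum>a=1..M. \<theta>0 a j * P a j i) / X j) * V i)
        = (\<Sum>i\<in>{1..n}. \<gamma>' * (\<Sum>a=1..M. \<theta>0 a j * P a j i) * V i) / X j"
      by (simp add: sum_divide_distrib)
    with Ve have "V j = ((\<Sum>a=1..M. \<theta>0 a j * Ga a j) + (\<Sum>i\<in>{1..n}. \<gamma>' * (\<Sum>a=1..M. \<theta>0 a j * P a j i) * V i)) / X j"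
      by (simp add: add_divide_distrib)
    then have "X j * V j = (\<Sum>a=1..M. \<theta>0 a j * Ga a j) + (\<Sum>i\<in>{1..n}. \<gamma>' * (\<Sum>a=1..M. \<theta>0 a j * P a j i) * V i)"
      using Xp[OF j] by (simp add: field_simps)
    also have "(\<Sum>i\<in>{1..n}. \<gamma>' * (\<Sum>a=1..M. \<theta>0 a j * P a j i) * V i)
        = (\<Sum>i\<in>{1..n}. \<Sum>a=1..M. \<theta>0 a j * (\<gamma>' * (P a j i * V i)))"
      by (simp add: sum_distrib_left sum_distrib_right mult.commute mult.left_commute)
    also have "\<dots> = (\<Sum>a=1..M. \<Sum>i\<in>{1..n}. \<theta>0 a j * (\<gamma>' * (P a j i * V i)))" by (rule sum.swap)
    also have "\<dots> = (\<Sum>a=1..M. \<theta>0 a j * (\<gamma>' * (\<Sum>i=1..n. P a j i * V i)))"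
      by (simp add: sum_distrib_left)
    finally show ?thesis by (simp add: distrib_left sum.distrib)
  qed
  have hle: "h a j \<le> Ga a j + \<gamma>' * (\<Sum>i=1..n. P a j i * V i)" if "a \<in> {1..M}" "j \<in> {1..n}" for a j
  proof -
    have "0 \<le> (\<Sum>i=1..n. P a j i * V i)" using that Pnn V0 by (auto intro!: sum_nonneg mult_nonneg_nonneg)
    then show ?thesis unfolding h_def using gg by (simp add: mult_right_mono)
  qed
  have ex: "\<exists>a\<in>{1..M}. \<forall>a'\<in>{1..M}. h a j \<le> h a' j" if j: "j \<in> {1..n}" for j
  proof -
    have ne: "{1..M} \<noteq> {}"
    proof
      assume "{1..M} = {}"
      then have "X j = 0" by (simp add: X_def)
      with Xp[OF j] show False by simp
    qed
    have "Min ((\<lambda>a. h a j) ` {1..M}) \<in> (\<lambda>a. h a j) ` {1..M}" using ne by (intro Min_in) auto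
    then obtain a where a: "a \<in> {1..M}" "h a j = Min ((\<lambda>a. h a j) ` {1..M})" by auto
    show ?thesis using a by (intro bexI[OF _ a(1)]) auto
  qed
  then obtain \<sigma> where \<sigma>: "\<forall>j\<in>{1..n}. \<sigma> j \<in> {1..M} \<and> (\<forall>a'\<in>{1..M}. h (\<sigma> j) j \<le> h a' j)"
    by metis
  have hV: "h (\<sigma> j) j \<le> V j" if j: "j \<in> {1..n}" for j
  proof -
    have "X j * h (\<sigma> j) j = (\<Sum>a=1..M. \<theta>0 a j * h (\<sigma> j) j)" by (simp add: X_def sum_distrib_right)
    also have "\<dots> \<le> (\<Sum>a=1..M. \<theta>0 a j * h a j)"
      using \<sigma> j th0 by (intro sum_mono mult_left_mono) auto
    also have "\<dots> \<le> (\<Sum>a=1..M. \<theta>0 a j * (Ga a j + \<gamma>' * (\<Sum>i=1..n. P a j i * V i)))"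
      using hle j th0 by (intro sum_mono mult_left_mono) auto
    also have "\<dots> = X j * V j" using XV[OF j] by simp
    finally show ?thesis using Xp[OF j] by simp
  qed
  have "\<exists>x. \<forall>j\<in>{1..n}. 0 \<le> x j \<and> x j = m j + \<gamma> * (\<Sum>i=1..n. P (\<sigma> i) i j * x i)"
    using \<sigma> V0 hV by (intro det_from_cert) (auto simp: h_def)
  then show ?thesis using \<sigma> by blast
qed


lemma main:
  assumes gg: "\<gamma> \<le> \<gamma>'" and f0: "primal_feasible M n P \<gamma>' m \<theta>0"
  shows "\<exists>\<theta>s V. primal_solution M n P Ga \<gamma> m \<theta>s \<and> dual_solution M n P Ga \<gamma> m V \<and>
     primal_obj M n Ga \<theta>s = (\<Sum>j=1..n. m j * V j) \<and>
     (\<forall>j\<in>{1..n}. \<exists>!a. a \<in> {1..M} \<and> 0 < \<theta>s a j \<and> (\<forall>a'\<in>{1..M}. a' \<noteq> a \<longrightarrow> \<theta>s a' j = 0))"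
proof -
  define ok where "ok \<sigma> x \<longleftrightarrow> (\<forall>j\<in>{1..n}. 0 \<le> x j \<and> x j = m j + \<gamma> * (\<Sum>i=1..n. P (\<sigma> i) i j * x i))"
    for \<sigma> :: "nat \<Rightarrow> nat" and x :: "nat \<Rightarrow> real"
  define Pol where "Pol = PiE {1..n} (\<lambda>_. {1..M::nat})"
  define FP where "FP = {\<sigma>\<in>Pol. \<exists>x. ok \<sigma> x}"
  define xs where "xs \<sigma> = (SOME x. ok \<sigma> x)" for \<sigma>
  define dth where "dth \<sigma> = (\<lambda>a j. if a = \<sigma> j then xs \<sigma> j else (0::real))" for \<sigma>
  define f where "f \<sigma> = primal_obj M n Ga (dth \<sigma>)" for \<sigma>
  have ok_cong: "ok \<sigma> x \<longleftrightarrow> ok \<sigma>' x" if "\<forall>i\<in>{1..n}. \<sigma> i = \<sigma>' i" for \<sigma> \<sigma>' x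
  proof -
    have "(\<Sum>i=1..n. P (\<sigma> i) i j * x i) = (\<Sum>i=1..n. P (\<sigma>' i) i j * x i)" for j
      by (rule sum.cong) (use that in auto)
    then show ?thesis unfolding ok_def by simp
  qed
  have finFP: "finite FP" unfolding FP_def Pol_def
    by (rule finite_subset[of _ "PiE {1..n} (\<lambda>_. {1..M::nat})"]) (auto intro: finite_PiE)
  obtain \<sigma>0 x0 where \<sigma>0: "\<forall>j\<in>{1..n}. \<sigma>0 j \<in> {1..M}" and x0: "ok \<sigma>0 x0"
    using exists_det[OF gg f0] unfolding ok_def by blast
  have "restrict \<sigma>0 {1..n} \<in> FP"
  proof -
    have "ok (restrict \<sigma>0 {1..n}) x0" using x0 ok_cong[of "restrict \<sigma>0 {1..n}" \<sigma>0] by simp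
    then show ?thesis using \<sigma>0 unfolding FP_def Pol_def by auto
  qed
  then have FPne: "FP \<noteq> {}" by blast
  have "Min (f ` FP) \<in> f ` FP" using finFP FPne by (intro Min_in) auto
  then obtain \<sigma>s where \<sigma>s: "\<sigma>s \<in> FP" "f \<sigma>s = Min (f ` FP)" by auto
  have fmin: "f \<sigma>s \<le> f \<sigma>" if "\<sigma> \<in> FP" for \<sigma> using \<sigma>s finFP that by simp
  have okx: "ok \<sigma> (xs \<sigma>)" if "\<sigma> \<in> FP" for \<sigma>
  proof -
    from that obtain x where "ok \<sigma> x" unfolding FP_def by blast
    then show ?thesis unfolding xs_def using someI[of "ok \<sigma>" x] by blast
  qed
  have sigA: "\<forall>j\<in>{1..n}. \<sigma> j \<in> {1..M}" if "\<sigma> \<in> FP" for \<sigma>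
    using that unfolding FP_def Pol_def by (auto simp: PiE_iff)
  have dfeas: "primal_feasible M n P \<gamma> m (dth \<sigma>)" if "\<sigma> \<in> FP" for \<sigma>
    unfolding dth_def by (rule det_feas[OF sigA[OF that] okx[OF that, unfolded ok_def]])
  have xsm: "m j \<le> xs \<sigma> j" if "\<sigma> \<in> FP" "j \<in> {1..n}" for \<sigma> j
  proof -
    have xs0: "\<forall>j\<in>{1..n}. 0 \<le> xs \<sigma> j" using okx[OF that(1)] unfolding ok_def by blast
    have "0 \<le> (\<Sum>i=1..n. P (\<sigma> i) i j * xs \<sigma> i)"
      using xs0 sigA[OF that(1)] Pnn that(2)
      by (intro sum_nonneg mult_nonneg_nonneg) auto
    moreover have "xs \<sigma> j = m j + \<gamma> * (\<Sum>i=1..n. P (\<sigma> i) i j * xs \<sigma> i)"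
      using okx[OF that(1)] that(2) unfolding ok_def by blast
    ultimately show ?thesis using gpos by (simp add: mult_nonneg_nonneg)
  qed
  obtain V where V: "\<forall>j\<in>{1..n}. 0 \<le> V j \<and> V j = Ga (\<sigma>s j) j + \<gamma> * (\<Sum>i=1..n. P (\<sigma>s j) j i * V i)"
    using det_value[OF sigA[OF \<sigma>s(1)], of "xs \<sigma>s"] okx[OF \<sigma>s(1)] unfolding ok_def by blast
  define r where "r a j = Ga a j + \<gamma> * (\<Sum>i=1..n. P a j i * V i) - V j" for a j
  have rs: "r (\<sigma>s j) j = 0" if "j \<in> {1..n}" for j
  proof -
    have "V j = Ga (\<sigma>s j) j + \<gamma> * (\<Sum>i=1..n. P (\<sigma>s j) j i * V i)" using V that by blast
    then show ?thesis unfolding r_def by linarith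
  qed
  have objfor: "f \<sigma> = (\<Sum>j=1..n. m j * V j) + (\<Sum>j=1..n. xs \<sigma> j * r (\<sigma> j) j)" if "\<sigma> \<in> FP" for \<sigma>
  proof -
    have "f \<sigma> = (\<Sum>j=1..n. m j * V j) + (\<Sum>a=1..M. \<Sum>j=1..n. dth \<sigma> a j * r a j)"
      unfolding f_def r_def by (rule ident[OF dfeas[OF that]])
    also have "(\<Sum>a=1..M. \<Sum>j=1..n. dth \<sigma> a j * r a j) = (\<Sum>j=1..n. xs \<sigma> j * r (\<sigma> j) j)"
      unfolding dth_def by (rule det_sum[OF sigA[OF that]])
    finally show ?thesis .
  qed
  have fs: "f \<sigma>s = (\<Sum>j=1..n. m j * V j)"
    using objfor[OF \<sigma>s(1)] rs by simp
  have rnn: "0 \<le> r a j" if a: "a \<in> {1..M}" and j: "j \<in> {1..n}" for a j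
  proof (rule ccontr)
    assume neg: "\<not> 0 \<le> r a j"
    define \<sigma>' where "\<sigma>' = \<sigma>s(j := a)"
    have sPol: "\<sigma>s \<in> Pol" using \<sigma>s(1) unfolding FP_def by blast
    have pol': "\<sigma>' \<in> Pol" using sPol a j unfolding \<sigma>'_def Pol_def by (auto simp: PiE_iff extensional_def)
    have sig': "\<forall>k\<in>{1..n}. \<sigma>' k \<in> {1..M}" using sigA[OF \<sigma>s(1)] a unfolding \<sigma>'_def by auto
    have cw: "\<forall>k\<in>{1..n}. Ga (\<sigma>' k) k + \<gamma> * (\<Sum>i=1..n. P (\<sigma>' k) k i * V i) \<le> V k"
    proof
      fix k assume k: "k \<in> {1..n}"
      show "Ga (\<sigma>' k) k + \<gamma> * (\<Sum>i=1..n. P (\<sigma>' k) k i * V i) \<le> V k"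
      proof (cases "k = j")
        case True then show ?thesis using neg unfolding \<sigma>'_def r_def by simp
      next
        case False then show ?thesis using rs[OF k] unfolding \<sigma>'_def r_def by simp
      qed
    qed
    have V0: "\<forall>j\<in>{1..n}. 0 \<le> V j" using V by blast
    have "\<exists>x. ok \<sigma>' x" unfolding ok_def
      using det_from_cert[OF sig' V0 cw] .
    with pol' have FP': "\<sigma>' \<in> FP" unfolding FP_def by blast
    have "(\<Sum>k=1..n. xs \<sigma>' k * r (\<sigma>' k) k) = (\<Sum>k=1..n. if k = j then xs \<sigma>' j * r a j else 0)"
      by (rule sum.cong) (auto simp: \<sigma>'_def rs)
    also have "\<dots> = xs \<sigma>' j * r a j" using j by simp
    finally have "f \<sigma>' = (\<Sum>j=1..n. m j * V j) + xs \<sigma>' j * r a j" using objfor[OF FP'] by simp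
    moreover have "xs \<sigma>' j * r a j < 0"
    proof (rule mult_pos_neg)
      show "0 < xs \<sigma>' j" using xsm[OF FP' j] mpos j by force
    qed (use neg in auto)
    ultimately have "f \<sigma>' < f \<sigma>s" using fs by simp
    with fmin[OF FP'] show False by simp
  qed
  have dV: "dual_feasible M n P Ga \<gamma> V"
    unfolding dual_feasible_def using rnn unfolding r_def by (auto simp: algebra_simps)
  have ps: "primal_solution M n P Ga \<gamma> m (dth \<sigma>s)"
    unfolding primal_solution_def using dfeas[OF \<sigma>s(1)] weak[OF dV] fs unfolding f_def by auto
  have ds: "dual_solution M n P Ga \<gamma> m V"
    unfolding dual_solution_def using dV weak[OF _ dfeas[OF \<sigma>s(1)]] fs unfolding f_def by auto
  have uq: "\<forall>j\<in>{1..n}. \<exists>!a. a \<in> {1..M} \<and> 0 < dth \<sigma>s a j \<and> (\<forall>a'\<in>{1..M}. a' \<noteq> a \<longrightarrow> dth \<sigma>s a' j = 0)"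
  proof
    fix j assume j: "j \<in> {1..n}"
    have "0 < xs \<sigma>s j" using xsm[OF \<sigma>s(1) j] mpos j by force
    then show "\<exists>!a. a \<in> {1..M} \<and> 0 < dth \<sigma>s a j \<and> (\<forall>a'\<in>{1..M}. a' \<noteq> a \<longrightarrow> dth \<sigma>s a' j = 0)"
      using sigA[OF \<sigma>s(1)] j unfolding dth_def by (intro ex1I[of _ "\<sigma>s j"]) (auto split: if_splits)
  qed
  show ?thesis using ps ds fs uq unfolding f_def by blast
qed

lemma part1:
  assumes ps: "primal_solution M n P Ga \<gamma> m \<theta>s" and ds: "dual_solution M n P Ga \<gamma> m Vs"
    and eq: "primal_obj M n Ga \<theta>s = (\<Sum>j=1..n. m j * Vs j)"
    and p: "primal_solution M n P Ga \<gamma> m \<theta>" and d: "dual_solution M n P Ga \<gamma> m V"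
  shows "\<forall>j\<in>{1..n}. \<exists>a\<in>{1..M}. V j = \<gamma> * (\<Sum>i=1..n. P a j i * V i) + Ga a j \<and> 0 < \<theta> a j"
proof
  fix j assume j: "j \<in> {1..n}"
  have pf: "primal_feasible M n P \<gamma> m \<theta>" and df: "dual_feasible M n P Ga \<gamma> V"
    using p d unfolding primal_solution_def dual_solution_def by auto
  have pfs: "primal_feasible M n P \<gamma> m \<theta>s" and dfs: "dual_feasible M n P Ga \<gamma> Vs"
    using ps ds unfolding primal_solution_def dual_solution_def by auto
  have "primal_obj M n Ga \<theta> \<le> primal_obj M n Ga \<theta>s" using p pfs unfolding primal_solution_def by blast
  moreover have "(\<Sum>j=1..n. m j * Vs j) \<le> (\<Sum>j=1..n. m j * V j)" using d dfs unfolding dual_solution_def by blast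
  moreover have "(\<Sum>j=1..n. m j * V j) \<le> primal_obj M n Ga \<theta>" using weak[OF df pf] .
  ultimately have oe: "primal_obj M n Ga \<theta> = (\<Sum>j=1..n. m j * V j)" using eq by linarith
  define r where "r a j = Ga a j + \<gamma> * (\<Sum>i=1..n. P a j i * V i) - V j" for a j
  have rnn: "0 \<le> r a k" if "a \<in> {1..M}" "k \<in> {1..n}" for a k
    using df that unfolding dual_feasible_def r_def by force
  have th0: "0 \<le> \<theta> a k" if "a \<in> {1..M}" "k \<in> {1..n}" for a k
    using pf that unfolding primal_feasible_def by blast
  have S0: "(\<Sum>a=1..M. \<Sum>k=1..n. \<theta> a k * r a k) = 0"
    using ident[OF pf, of V] oe unfolding r_def by simp
  have "\<forall>a\<in>{1..M}. (\<Sum>k=1..n. \<theta> a k * r a k) = 0"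
    using S0 rnn th0 by (subst (asm) sum_nonneg_eq_0_iff) (auto intro!: sum_nonneg mult_nonneg_nonneg)
  then have Z: "\<theta> a k * r a k = 0" if "a \<in> {1..M}" "k \<in> {1..n}" for a k
    using that rnn th0 sum_nonneg_eq_0_iff[of "{1..n}" "\<lambda>k. \<theta> a k * r a k"] by auto
  have "m j \<le> (\<Sum>a=1..M. \<theta> a j)" using occ_ge_m[OF pf _ j] gpos by simp
  then have "0 < (\<Sum>a=1..M. \<theta> a j)" using mpos j by force
  then obtain a where a: "a \<in> {1..M}" "0 < \<theta> a j"
    using sum_nonpos[of "{1..M}" "\<lambda>a. \<theta> a j"] by (metis not_le)
  then have "r a j = 0" using Z[OF a(1) j] by simp
  then show "\<exists>a\<in>{1..M}. V j = \<gamma> * (\<Sum>i=1..n. P a j i * V i) + Ga a j \<and> 0 < \<theta> a j"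
    using a unfolding r_def by (intro bexI[of _ a]) auto
qed

end
theorem lemma2:
  fixes X :: "'x::euclidean_space set"
    and D :: "nat \<Rightarrow> 'x set"
    and T :: "'x \<Rightarrow> 'u \<Rightarrow> 'e \<Rightarrow> 'x"
    and u :: "nat \<Rightarrow> 'u" and \<xi> :: "nat \<Rightarrow> 'e" and v :: "nat \<Rightarrow> real"
    and G :: "nat \<Rightarrow> nat \<Rightarrow> nat \<Rightarrow> real" and m :: "nat \<Rightarrow> real"
    and N M L :: nat
  assumes X_compact: "compact X"
    and D_meas: "\<forall>i\<in>{1..N}. D i \<in> sets lebesgue"
    and D_disj: "\<forall>i\<in>{1..N}. \<forall>j\<in>{1..N}. i \<noteq> j \<longrightarrow> D i \<inter> D j = {}"
    and D_cover: "(\<Union>i\<in>{1..N}. D i) = X"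
    and T_maps: "\<forall>x\<in>X. \<forall>a\<in>{1..M}. \<forall>l\<in>{1..L}. T x (u a) (\<xi> l) \<in> X"
    and v_nonneg: "\<forall>l\<in>{1..L}. 0 \<le> v l"
    and v_sum: "(\<Sum>l = 1..L. v l) = 1"
    and feas: "\<exists>\<gamma>>1. \<exists>\<theta>. primal_feasible M (N - 1) (markov_a T D u \<xi> v L) \<gamma> m \<theta>"
    and m_pos: "\<forall>j\<in>{1..N - 1}. 0 < m j"
    and G_pos: "\<forall>a\<in>{1..M}. \<forall>j\<in>{1..N - 1}. 0 < cost_a G v L a j"
  shows "\<forall>\<gamma>::real. 1 \<le> \<gamma> \<and>
      ereal \<gamma> < Sup (ereal ` {\<gamma>'. 1 < \<gamma>' \<and>
                   (\<exists>\<theta>. primal_feasible M (N - 1) (markov_a T D u \<xi> v L) \<gamma>' m \<theta>)}) \<longrightarrow>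
    (\<exists>\<theta>. primal_solution M (N - 1) (markov_a T D u \<xi> v L) (cost_a G v L) \<gamma> m \<theta>) \<and>
    (\<exists>V. dual_solution M (N - 1) (markov_a T D u \<xi> v L) (cost_a G v L) \<gamma> m V) \<and>
    (\<forall>\<theta> V. primal_solution M (N - 1) (markov_a T D u \<xi> v L) (cost_a G v L) \<gamma> m \<theta> \<longrightarrow>
           dual_solution M (N - 1) (markov_a T D u \<xi> v L) (cost_a G v L) \<gamma> m V \<longrightarrow>
       (\<forall>j\<in>{1..N - 1}. \<exists>a\<in>{1..M}.
          V j = \<gamma> * (\<Sum>i = 1..N - 1. markov_a T D u \<xi> v L a j i * V i) + cost_a G v L a j
          \<and> 0 < \<theta> a j)) \<and>
    (\<exists>\<theta>'. primal_solution M (N - 1) (markov_a T D u \<xi> v L) (cost_a G v L) \<gamma> m \<theta>' \<and>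
       (\<forall>j\<in>{1..N - 1}. \<exists>!a. a \<in> {1..M} \<and> 0 < \<theta>' a j \<and>
          (\<forall>a'\<in>{1..M}. a' \<noteq> a \<longrightarrow> \<theta>' a' j = 0)))"
  proof (intro allI impI)
  fix \<gamma> :: real
  let ?P = "markov_a T D u \<xi> v L"
  let ?G = "cost_a G v L"
  assume H: "1 \<le> \<gamma> \<and> ereal \<gamma> < Sup (ereal ` {\<gamma>'. 1 < \<gamma>' \<and> (\<exists>\<theta>. primal_feasible M (N - 1) ?P \<gamma>' m \<theta>)})"
  then obtain \<gamma>' where g': "1 < \<gamma>'" "\<exists>\<theta>. primal_feasible M (N - 1) ?P \<gamma>' m \<theta>" "ereal \<gamma> < ereal \<gamma>'"
    by (auto simp: less_Sup_iff)
  then obtain \<theta>0 where f0: "primal_feasible M (N - 1) ?P \<gamma>' m \<theta>0" by blast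
  have gg: "\<gamma> \<le> \<gamma>'" using g'(3) by simp
  have gpos: "0 < \<gamma>" using H by linarith
  have Pnn: "\<forall>a\<in>{1..M}. \<forall>i\<in>{1..N - 1}. \<forall>j\<in>{1..N - 1}. 0 \<le> ?P a i j"
    unfolding markov_a_def markov_al_def using v_nonneg
    by (auto intro!: sum_nonneg mult_nonneg_nonneg divide_nonneg_nonneg)
  obtain \<theta>s Vs where M1: "primal_solution M (N - 1) ?P ?G \<gamma> m \<theta>s" "dual_solution M (N - 1) ?P ?G \<gamma> m Vs"
     "primal_obj M (N - 1) ?G \<theta>s = (\<Sum>j=1..N - 1. m j * Vs j)"
     "\<forall>j\<in>{1..N - 1}. \<exists>!a. a \<in> {1..M} \<and> 0 < \<theta>s a j \<and> (\<forall>a'\<in>{1..M}. a' \<noteq> a \<longrightarrow> \<theta>s a' j = 0)"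
    using main[OF Pnn G_pos m_pos gpos gg f0] by blast
  have P1: "\<forall>\<theta> V. primal_solution M (N - 1) ?P ?G \<gamma> m \<theta> \<longrightarrow> dual_solution M (N - 1) ?P ?G \<gamma> m V \<longrightarrow>
       (\<forall>j\<in>{1..N - 1}. \<exists>a\<in>{1..M}. V j = \<gamma> * (\<Sum>i = 1..N - 1. ?P a j i * V i) + ?G a j \<and> 0 < \<theta> a j)"
    using part1[OF Pnn G_pos m_pos gpos M1(1) M1(2) M1(3)] by blast
  show "(\<exists>\<theta>. primal_solution M (N - 1) ?P ?G \<gamma> m \<theta>) \<and> (\<exists>V. dual_solution M (N - 1) ?P ?G \<gamma> m V) \<and>
    (\<forall>\<theta> V. primal_solution M (N - 1) ?P ?G \<gamma> m \<theta> \<longrightarrow> dual_solution M (N - 1) ?P ?G \<gamma> m V \<longrightarrow>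
       (\<forall>j\<in>{1..N - 1}. \<exists>a\<in>{1..M}. V j = \<gamma> * (\<Sum>i = 1..N - 1. ?P a j i * V i) + ?G a j \<and> 0 < \<theta> a j)) \<and>
    (\<exists>\<theta>'. primal_solution M (N - 1) ?P ?G \<gamma> m \<theta>' \<and>
       (\<forall>j\<in>{1..N - 1}. \<exists>!a. a \<in> {1..M} \<and> 0 < \<theta>' a j \<and> (\<forall>a'\<in>{1..M}. a' \<noteq> a \<longrightarrow> \<theta>' a' j = 0)))"
    using M1 P1 by blast
qed

end
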